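(* Let $n\geq 3$, $a>1$, $p,q\in\mathbb{R}$, and let $f_t(x)$, $x\in[1,a]$, solve $$\dot f=u''(x)\left(\frac{f''}{1+f'^2}+(n-1)\frac{xf'-f}{x^2+f^2}\right),\qquad f_t(1)=q,\ f_t(a)=p,$$ where $f_0$ satisfies the supercritical phase assumption $(n-1)\arctan\left(\frac{f_0}{x}\right)+\arctan(f_0')>(n-2)\frac{\pi}{2}$. Then $f_t$ has bounded first derivative for all finite times; in particular there exist uniform constants $A,B$ such that $$\sup_{x\in[1,a]}|f_t'(x)|\leq A(1+t)e^{Bt}$$ for all $t$ for which the flow is defined.
   Context: This is the line bundle mean curvature flow on the blowup of $\mathbb{P}^n$ at a point under Calabi symmetry, written in the Legendre coordinate $x\in[1,a]$: $u''$ is the smooth function of $x$ coming from the Calabi-symmetric K\"ahler form $\omega=i\partial\bar\partial u$ in $a[H]-[E]$ (positive on $(1,a)$, vanishing linearly at the endpoints), and $f$ encodes a Calabi-symmetric form $\alpha_t$ in $p[H]-q[E]$ whose eigenvalues relative to $\omega$ are $f/x$ (multiplicity $n-1$) and $f'$, so its angle is $\Theta=(n-1)\arctan(f/x)+\arctan(f')$. *)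

theory Defs
  imports "HOL-Analysis.Analysis" "HOL-Library.Extended_Real"
begin

text \<open>Smoothness (C-infinity up to the boundary) of a function of two real variables
  (t,x) on a set S, witnessed by a family D i j of its mixed partial derivatives
  (i derivatives in t, j derivatives in x), all continuous on S, with D 0 0 = F.\<close>
definition smooth2_on ::
  "(real \<times> real) set \<Rightarrow> (real \<times> real \<Rightarrow> real) \<Rightarrow> (nat \<Rightarrow> nat \<Rightarrow> real \<times> real \<Rightarrow> real) \<Rightarrow> bool" where
  "smooth2_on S F D \<longleftrightarrow>
     (\<forall>z\<in>S. D 0 0 z = F z) \<and>
     (\<forall>i j. continuous_on S (D i j)) \<and>
     (\<forall>i j t x. (t, x) \<in> S \<longrightarrow>
        ((\<lambda>s. D i j (s, x)) has_real_derivative D (Suc i) j (t, x)) (at t within {s. (s, x) \<in> S}) \<and>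
        ((\<lambda>y. D i j (t, y)) has_real_derivative D i (Suc j) (t, x)) (at x within {y. (t, y) \<in> S}))"

definition smooth1 :: "(real \<Rightarrow> real) \<Rightarrow> bool" where
  "smooth1 g \<longleftrightarrow> (\<forall>k x. ((deriv ^^ k) g) differentiable (at x))"

end

theory Submission
  imports Defs
begin

lemma ereal_lt_mono: "s \<le> t \<Longrightarrow> ereal t < T \<Longrightarrow> ereal s < T"
  by (metis ereal_less_eq(3) order.strict_trans1)


lemma incr_on:
  fixes \<phi> \<phi>' :: "real \<Rightarrow> real"
  assumes der: "\<forall>y\<in>{lo..hi}. (\<phi> has_real_derivative \<phi>' y) (at y within {lo..hi})"
    and "lo \<le> c" "c < d" "d \<le> hi" and pos: "\<forall>y. c < y \<and> y < d \<longrightarrow> \<phi>' y > 0"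
  shows "\<phi> c < \<phi> d"
proof (rule DERIV_pos_imp_increasing_open[of c d \<phi>])
  show "c < d" by fact
  fix y assume y: "c < y" "y < d"
  have lo: "lo < y" "y < hi" using y assms by linarith+
  then have e: "at y within {lo..hi} = at y" by (intro at_within_Icc_at)
  have "y \<in> {lo..hi}" using lo by simp
  then have "(\<phi> has_real_derivative \<phi>' y) (at y within {lo..hi})" using der by blast
  then have "(\<phi> has_real_derivative \<phi>' y) (at y)" using e by simp
  moreover have "0 < \<phi>' y" using pos y by blast
  ultimately show "\<exists>l. (\<phi> has_real_derivative l) (at y) \<and> 0 < l" by blast
next
  have "continuous_on {lo..hi} \<phi>" using der by (intro DERIV_continuous_on) auto
  then show "continuous_on {c..d} \<phi>" by (rule continuous_on_subset) (use assms in auto)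
qed

lemma decr_on:
  fixes \<phi> \<phi>' :: "real \<Rightarrow> real"
  assumes der: "\<forall>y\<in>{lo..hi}. (\<phi> has_real_derivative \<phi>' y) (at y within {lo..hi})"
    and "lo \<le> c" "c < d" "d \<le> hi" and neg: "\<forall>y. c < y \<and> y < d \<longrightarrow> \<phi>' y < 0"
  shows "\<phi> c > \<phi> d"
proof -
  have der': "\<forall>y\<in>{lo..hi}. ((\<lambda>y. - \<phi> y) has_real_derivative (\<lambda>y. - \<phi>' y) y) (at y within {lo..hi})"
    using der by (simp add: DERIV_minus)
  have "(\<lambda>y. - \<phi> y) c < (\<lambda>y. - \<phi> y) d"
    by (rule incr_on[OF der']) (use assms in auto)
  then show ?thesis by simp
qed

lemma max_first:
  fixes \<phi> \<phi>' :: "real \<Rightarrow> real"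
  assumes der: "\<forall>y\<in>{lo..hi}. (\<phi> has_real_derivative \<phi>' y) (at y within {lo..hi})"
    and x0: "x0 \<in> {lo..hi}" and mx: "\<forall>y\<in>{lo..hi}. \<phi> y \<le> \<phi> x0"
  shows "(x0 < hi \<longrightarrow> \<phi>' x0 \<le> 0) \<and> (lo < x0 \<longrightarrow> \<phi>' x0 \<ge> 0)"
proof -
  have dx: "(\<phi> has_real_derivative \<phi>' x0) (at x0 within {lo..hi})" using der x0 by blast
  have A: "\<phi>' x0 \<le> 0" if h: "x0 < hi"
  proof (rule ccontr)
    assume "\<not> \<phi>' x0 \<le> 0"
    then have "0 < \<phi>' x0" by simp
    from has_real_derivative_pos_inc_right[OF dx this]
    obtain d where d: "d > 0" "\<forall>h>0. x0 + h \<in> {lo..hi} \<longrightarrow> h < d \<longrightarrow> \<phi> x0 < \<phi> (x0 + h)"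
      by blast
    define e where "e = min d (hi - x0) / 2"
    have m: "x0 + e \<in> {lo..hi}" "e < d" "e > 0" using d(1) h x0 unfolding e_def by (auto simp: min_def field_simps)
    have "\<phi> x0 < \<phi> (x0 + e)" using d(2) m by blast
    moreover have "\<phi> (x0 + e) \<le> \<phi> x0" using mx m(1) by blast
    ultimately show False by linarith
  qed
  have B: "\<phi>' x0 \<ge> 0" if h: "lo < x0"
  proof (rule ccontr)
    assume "\<not> \<phi>' x0 \<ge> 0"
    then have "\<phi>' x0 < 0" by simp
    from has_real_derivative_neg_dec_left[OF dx this]
    obtain d where d: "d > 0" "\<forall>h>0. x0 - h \<in> {lo..hi} \<longrightarrow> h < d \<longrightarrow> \<phi> x0 < \<phi> (x0 - h)"
      by blast
    define e where "e = min d (x0 - lo) / 2"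
    have m: "x0 - e \<in> {lo..hi}" "e < d" "e > 0" using d(1) h x0 unfolding e_def by (auto simp: min_def field_simps)
    have "\<phi> x0 < \<phi> (x0 - e)" using d(2) m by blast
    moreover have "\<phi> (x0 - e) \<le> \<phi> x0" using mx m(1) by blast
    ultimately show False by linarith
  qed
  show ?thesis using A B by blast
qed

lemma max_second:
  fixes \<phi> \<phi>' :: "real \<Rightarrow> real"
  assumes der: "\<forall>y\<in>{lo..hi}. (\<phi> has_real_derivative \<phi>' y) (at y within {lo..hi})"
    and der2: "(\<phi>' has_real_derivative \<phi>'') (at x0 within {lo..hi})"
    and x0: "lo < x0" "x0 < hi" and mx: "\<forall>y\<in>{lo..hi}. \<phi> y \<le> \<phi> x0"
  shows "\<phi>' x0 = 0 \<and> \<phi>'' \<le> 0"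
proof -
  have x0': "x0 \<in> {lo..hi}" using x0 by simp
  have "(x0 < hi \<longrightarrow> \<phi>' x0 \<le> 0) \<and> (lo < x0 \<longrightarrow> \<phi>' x0 \<ge> 0)" by (rule max_first[OF der x0' mx])
  then have z: "\<phi>' x0 = 0" using x0 by linarith
  moreover have "\<phi>'' \<le> 0"
  proof (rule ccontr)
    assume "\<not> \<phi>'' \<le> 0"
    then have "0 < \<phi>''" by simp
    from has_real_derivative_pos_inc_left[OF der2 this]
    obtain d where d: "d > 0" "\<forall>h>0. x0 - h \<in> {lo..hi} \<longrightarrow> h < d \<longrightarrow> \<phi>' (x0 - h) < \<phi>' x0"
      by blast
    define c where "c = max lo (x0 - d/2)"
    have c1: "lo \<le> c" "x0 - d/2 \<le> c" "c < x0" using x0 d(1) unfolding c_def by auto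
    have neg: "\<forall>y. c < y \<and> y < x0 \<longrightarrow> \<phi>' y < 0"
    proof (intro allI impI)
      fix y assume y: "c < y \<and> y < x0"
      have yy: "x0 - (x0 - y) \<in> {lo..hi}" "x0 - y > 0" "x0 - y < d" using y c1 x0 by auto
      have "\<phi>' (x0 - (x0 - y)) < \<phi>' x0" using d(2) yy by blast
      then show "\<phi>' y < 0" using z by simp
    qed
    have "\<phi> c > \<phi> x0" by (rule decr_on[OF der c1(1) c1(3) _ neg]) (use x0 in simp)
    moreover have "c \<in> {lo..hi}" using c1 x0 by simp
    then have "\<phi> c \<le> \<phi> x0" using mx by blast
    ultimately show False by linarith
  qed
  ultimately show ?thesis by simp
qed

lemma min_h:
  fixes \<phi> \<phi>' h u :: "real \<Rightarrow> real"
  assumes lohi: "lo < hi"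
    and der: "\<forall>y\<in>{lo..hi}. (\<phi> has_real_derivative \<phi>' y) (at y within {lo..hi})"
    and derh: "(h has_real_derivative h') (at x0 within {lo..hi})"
    and hu: "\<forall>y\<in>{lo..hi}. h y = u y * \<phi>' y"
    and upos: "\<forall>y. lo < y \<and> y < hi \<longrightarrow> u y > 0" and u0: "u lo = 0" "u hi = 0"
    and x0: "x0 \<in> {lo..hi}" and mn: "\<forall>y\<in>{lo..hi}. \<phi> x0 \<le> \<phi> y"
  shows "h x0 = 0 \<and> h' \<ge> 0"
proof -
  have der': "\<forall>y\<in>{lo..hi}. ((\<lambda>y. - \<phi> y) has_real_derivative (\<lambda>y. - \<phi>' y) y) (at y within {lo..hi})"
    using der by (simp add: DERIV_minus)
  have mn': "\<forall>y\<in>{lo..hi}. (\<lambda>y. - \<phi> y) y \<le> (\<lambda>y. - \<phi> y) x0" using mn by simp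
  have mf: "(x0 < hi \<longrightarrow> (\<lambda>y. - \<phi>' y) x0 \<le> 0) \<and> (lo < x0 \<longrightarrow> (\<lambda>y. - \<phi>' y) x0 \<ge> 0)"
    by (rule max_first[OF der' x0 mn'])
  have hx0: "h x0 = u x0 * \<phi>' x0" using hu x0 by blast
  have h0: "h x0 = 0"
  proof (cases "x0 = lo \<or> x0 = hi")
    case True then show ?thesis using hx0 u0 by auto
  next
    case False
    then have "lo < x0" "x0 < hi" using x0 by auto
    then have "\<phi>' x0 = 0" using mf by simp
    then show ?thesis using hx0 by simp
  qed
  moreover have "h' \<ge> 0"
  proof (rule ccontr)
    assume "\<not> h' \<ge> 0"
    then have hneg: "h' < 0" by simp
    show False
    proof (cases "x0 = lo")
      case True
      from has_real_derivative_neg_dec_right[OF derh hneg]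
      obtain d where d: "d > 0" "\<forall>s>0. x0 + s \<in> {lo..hi} \<longrightarrow> s < d \<longrightarrow> h x0 > h (x0 + s)"
        by blast
      define c where "c = min hi (x0 + d/2)"
      have c1: "c \<le> hi" "c \<le> x0 + d/2" "x0 < c" using lohi True d(1) unfolding c_def by auto
      have neg: "\<forall>y. x0 < y \<and> y < c \<longrightarrow> \<phi>' y < 0"
      proof (intro allI impI)
        fix y assume y: "x0 < y \<and> y < c"
        have yy: "x0 + (y - x0) \<in> {lo..hi}" "y - x0 > 0" "y - x0 < d" using y c1 x0 by auto
        have "h (x0 + (y - x0)) < h x0" using d(2) yy by blast
        then have "h y < 0" using h0 by simp
        moreover have "u y > 0" using upos y c1 True by auto
        moreover have "h y = u y * \<phi>' y" using hu yy(1) by simp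
        ultimately show "\<phi>' y < 0" by (simp add: mult_less_0_iff)
      qed
      have "\<phi> x0 > \<phi> c" by (rule decr_on[OF der _ c1(3) c1(1) neg]) (use x0 in simp)
      moreover have "c \<in> {lo..hi}" using c1 x0 by simp
      then have "\<phi> x0 \<le> \<phi> c" using mn by blast
      ultimately show False by linarith
    next
      case False
      then have xl: "lo < x0" using x0 by auto
      from has_real_derivative_neg_dec_left[OF derh hneg]
      obtain d where d: "d > 0" "\<forall>s>0. x0 - s \<in> {lo..hi} \<longrightarrow> s < d \<longrightarrow> h x0 < h (x0 - s)"
        by blast
      define c where "c = max lo (x0 - d/2)"
      have c1: "lo \<le> c" "x0 - d/2 \<le> c" "c < x0" using xl d(1) unfolding c_def by auto
      have pos: "\<forall>y. c < y \<and> y < x0 \<longrightarrow> \<phi>' y > 0"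
      proof (intro allI impI)
        fix y assume y: "c < y \<and> y < x0"
        have yy: "x0 - (x0 - y) \<in> {lo..hi}" "x0 - y > 0" "x0 - y < d" using y c1 x0 by auto
        have "h (x0 - (x0 - y)) > h x0" using d(2) yy by blast
        then have "h y > 0" using h0 by simp
        moreover have "u y > 0" using upos y c1 x0 by auto
        moreover have "h y = u y * \<phi>' y" using hu yy(1) by simp
        ultimately show "\<phi>' y > 0" by (simp add: zero_less_mult_iff)
      qed
      have "\<phi> c < \<phi> x0" by (rule incr_on[OF der c1(1) c1(3) _ pos]) (use x0 in simp)
      moreover have "c \<in> {lo..hi}" using c1 x0 by simp
      then have "\<phi> x0 \<le> \<phi> c" using mn by blast
      ultimately show False by linarith
    qed
  qed
  ultimately show ?thesis by simp
qed

lemma mp_principle: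
  fixes g gt :: "real \<times> real \<Rightarrow> real" and T :: ereal and a :: real
  defines "S \<equiv> {(t, x). 0 \<le> t \<and> ereal t < T \<and> 1 \<le> x \<and> x \<le> a}"
  assumes cont: "continuous_on S g"
    and der: "\<forall>t x. (t, x) \<in> S \<longrightarrow> ((\<lambda>s. g (s, x)) has_real_derivative gt (t, x)) (at t within {s. (s, x) \<in> S})"
    and init: "\<forall>x. 1 \<le> x \<and> x \<le> a \<longrightarrow> g (0, x) < 0"
    and step: "\<forall>t x. (t, x) \<in> S \<longrightarrow> 0 < t \<longrightarrow> g (t, x) = 0 \<longrightarrow> (\<forall>y. 1 \<le> y \<and> y \<le> a \<longrightarrow> g (t, y) \<le> 0) \<longrightarrow> gt (t, x) < 0"
  shows "\<forall>t x. (t, x) \<in> S \<longrightarrow> g (t, x) < 0"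
proof (intro allI impI, rule ccontr)
  fix t1 x1 assume t1: "(t1, x1) \<in> S" and bad: "\<not> g (t1, x1) < 0"
  define K where "K = {0..t1} \<times> {1..a}"
  have KS: "K \<subseteq> S"
  proof
    fix z assume "z \<in> K"
    then obtain s y where z: "z = (s, y)" "0 \<le> s" "s \<le> t1" "1 \<le> y" "y \<le> a" unfolding K_def by auto
    have "ereal t1 < T" using t1 unfolding S_def by auto
    then have "ereal s < T" using ereal_lt_mono[of s t1 T] z by auto
    then show "z \<in> S" using z unfolding S_def by auto
  qed
  have cK: "compact K" unfolding K_def by (intro compact_Times) auto
  define Z where "Z = K \<inter> g -` {0..}"
  have "closed Z" unfolding Z_def
    by (rule continuous_closed_preimage[OF continuous_on_subset[OF cont KS] compact_imp_closed[OF cK]]) simp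
  then have "compact (K \<inter> Z)" using cK by (intro compact_Int_closed)
  moreover have "K \<inter> Z = Z" unfolding Z_def by auto
  ultimately have "compact Z" by simp
  then have cZ: "compact (fst ` Z)" by (intro compact_continuous_image continuous_intros)
  have "(t1, x1) \<in> Z" using t1 bad unfolding Z_def K_def S_def by auto
  then have "fst ` Z \<noteq> {}" by auto
  then obtain t0 where t0Z: "t0 \<in> fst ` Z" and t0min: "\<forall>s\<in>fst ` Z. t0 \<le> s"
    using compact_attains_inf[OF cZ] by blast
  then obtain x0 where z0: "(t0, x0) \<in> Z" by auto
  have t0t1: "0 \<le> t0" "t0 \<le> t1" and x0r: "1 \<le> x0" "x0 \<le> a" and g0: "g (t0, x0) \<ge> 0"
    using z0 unfolding Z_def K_def by auto
  have t0S: "(t0, x0) \<in> S" using z0 KS unfolding Z_def by auto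
  have t0pos: "0 < t0" using init x0r g0 t0t1 by (cases "t0 = 0") auto
  have before: "g (s, y) < 0" if "0 \<le> s" "s < t0" "1 \<le> y" "y \<le> a" for s y
  proof (rule ccontr)
    assume "\<not> g (s, y) < 0"
    then have "(s, y) \<in> Z" using that t0t1 unfolding Z_def K_def by auto
    then have "s \<in> fst ` Z" by (rule image_eqI[rotated]) simp
    then show False using t0min that by fastforce
  qed
  have slice: "{s. (s, y) \<in> S} = {s. 0 \<le> s \<and> ereal s < T}" if "1 \<le> y" "y \<le> a" for y
    using that unfolding S_def by auto
  have atmost: "g (t0, y) \<le> 0" if y: "1 \<le> y" "y \<le> a" for y
  proof (rule ccontr)
    assume pos: "\<not> g (t0, y) \<le> 0"
    have yS: "(t0, y) \<in> S" using t0S y unfolding S_def by auto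
    have "continuous (at t0 within {s. (s, y) \<in> S}) (\<lambda>s. g (s, y))"
      using der yS by (intro DERIV_continuous) auto
    then obtain d where d: "d > 0" "\<forall>s\<in>{s. (s, y) \<in> S}. dist s t0 < d \<longrightarrow> dist (g (s, y)) (g (t0, y)) < g (t0, y)"
    proof -
      have "g (t0, y) > 0" using pos by simp
      with \<open>continuous (at t0 within {s. (s, y) \<in> S}) (\<lambda>s. g (s, y))\<close>
      show ?thesis unfolding continuous_within_eps_delta by (elim allE[of _ "g (t0, y)"]) (auto intro: that)
    qed
    define s where "s = max 0 (t0 - d/2)"
    have "s \<le> t0" "0 \<le> s" using d t0pos unfolding s_def by auto
    then have sS: "(s, y) \<in> S" using yS ereal_lt_mono[of s t0 T] unfolding S_def by auto
    have "dist (g (s, y)) (g (t0, y)) < g (t0, y)" using d sS t0pos unfolding s_def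
      by (auto simp: dist_real_def)
    moreover have "g (s, y) < 0" using before[of s y] y d t0pos unfolding s_def by auto
    ultimately show False by (auto simp: dist_real_def)
  qed
  have geq: "g (t0, x0) = 0" using atmost[OF x0r] g0 by auto
  have "\<forall>y. 1 \<le> y \<and> y \<le> a \<longrightarrow> g (t0, y) \<le> 0" using atmost by simp
  then have neg: "gt (t0, x0) < 0" using step[rule_format, OF t0S t0pos geq] by simp
  obtain d where d: "d > 0" "\<forall>h>0. t0 - h \<in> {s. (s, x0) \<in> S} \<longrightarrow> h < d \<longrightarrow> g (t0, x0) < g (t0 - h, x0)"
    using has_real_derivative_neg_dec_left[OF der[rule_format, OF t0S] neg] by auto
  define h where "h = min d t0 / 2"
  have "t0 - h \<le> t0" "0 \<le> t0 - h" using d t0pos unfolding h_def by auto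
  then have "(t0 - h, x0) \<in> S" using t0S ereal_lt_mono[of "t0 - h" t0 T] unfolding S_def by auto
  then have "g (t0, x0) < g (t0 - h, x0)" using d t0pos unfolding h_def by auto
  moreover have "g (t0 - h, x0) < 0" using before[of "t0 - h" x0] x0r d t0pos unfolding h_def by auto
  ultimately show False using geq by auto
qed

lemma sq1pos: "(1::real) + y\<^sup>2 > 0"
  by (metis add_pos_nonneg zero_less_one zero_le_power2)

lemma sqxpos: "(x::real) \<noteq> 0 \<Longrightarrow> x\<^sup>2 + y\<^sup>2 > 0"
  by (simp add: add_pos_nonneg)

lemma deriv_arctan_quot:
  fixes f :: "real \<Rightarrow> real"
  assumes df: "(f has_real_derivative fx) (at x within X)" and x: "x \<noteq> 0"
  shows "((\<lambda>y. arctan (f y / y)) has_real_derivative (x * fx - f x) / (x\<^sup>2 + (f x)\<^sup>2)) (at x within X)"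
proof -
  have q: "((\<lambda>y. f y / y) has_real_derivative (fx * x - 1 * f x) / (x ^ Suc (Suc 0))) (at x within X)"
    by (rule DERIV_quotient[OF df DERIV_ident x])
  have c: "((\<lambda>y. arctan (f y / y)) has_real_derivative inverse (1 + (f x / x)\<^sup>2) * ((fx * x - 1 * f x) / (x ^ Suc (Suc 0)))) (at x within X)"
    by (rule DERIV_chain2[OF DERIV_arctan q])
  have p: "x\<^sup>2 + (f x)\<^sup>2 > 0" using sqxpos[OF x] .
  have e1: "1 + (f x / x)\<^sup>2 = (x\<^sup>2 + (f x)\<^sup>2) / x\<^sup>2" using x by (simp add: field_simps)
  have "inverse (1 + (f x / x)\<^sup>2) * ((fx * x - 1 * f x) / (x ^ Suc (Suc 0)))
      = (x\<^sup>2 / (x\<^sup>2 + (f x)\<^sup>2)) * ((fx * x - f x) / x\<^sup>2)"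
    unfolding e1 by (simp add: numeral_2_eq_2)
  also have "\<dots> = (x * fx - f x) / (x\<^sup>2 + (f x)\<^sup>2)" using x p by (simp add: mult.commute)
  finally show ?thesis using c by simp
qed

lemma deriv_arctan_const:
  fixes f :: "real \<Rightarrow> real"
  assumes df: "(f has_real_derivative fx) (at s within X)" and c: "c \<noteq> 0"
  shows "((\<lambda>s. arctan (f s / c)) has_real_derivative (c * fx) / (c\<^sup>2 + (f s)\<^sup>2)) (at s within X)"
proof -
  have q: "((\<lambda>y. f y / c) has_real_derivative fx / c) (at s within X)"
    using DERIV_cdivide[OF df, of c] by simp
  have d: "((\<lambda>y. arctan (f y / c)) has_real_derivative inverse (1 + (f s / c)\<^sup>2) * (fx / c)) (at s within X)"
    by (rule DERIV_chain2[OF DERIV_arctan q])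
  have p: "c\<^sup>2 + (f s)\<^sup>2 > 0" using sqxpos[OF c] .
  have e1: "1 + (f s / c)\<^sup>2 = (c\<^sup>2 + (f s)\<^sup>2) / c\<^sup>2" using c by (simp add: field_simps)
  have "inverse (1 + (f s / c)\<^sup>2) * (fx / c) = (c\<^sup>2 / (c\<^sup>2 + (f s)\<^sup>2)) * (fx / c)"
    unfolding e1 by simp
  also have "\<dots> = (c * fx) / (c\<^sup>2 + (f s)\<^sup>2)" using c p by (simp add: field_simps power2_eq_square)
  finally show ?thesis using d by simp
qed

lemma deriv_arctan1:
  fixes v :: "real \<Rightarrow> real"
  assumes dv: "(v has_real_derivative w) (at x within X)"
  shows "((\<lambda>y. arctan (v y)) has_real_derivative w / (1 + (v x)\<^sup>2)) (at x within X)"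
proof -
  have "((\<lambda>y. arctan (v y)) has_real_derivative inverse (1 + (v x)\<^sup>2) * w) (at x within X)"
    by (rule DERIV_chain2[OF DERIV_arctan dv])
  then show ?thesis by (simp add: field_simps)
qed

lemma deriv_theta_x:
  fixes f v :: "real \<Rightarrow> real"
  assumes df: "(f has_real_derivative v x) (at x within X)"
    and dv: "(v has_real_derivative w) (at x within X)" and x: "x \<noteq> 0"
  shows "((\<lambda>y. N * arctan (f y / y) + arctan (v y)) has_real_derivative
           N * ((x * v x - f x) / (x\<^sup>2 + (f x)\<^sup>2)) + w / (1 + (v x)\<^sup>2)) (at x within X)"
  by (rule DERIV_add[OF DERIV_cmult[OF deriv_arctan_quot[OF df x]] deriv_arctan1[OF dv]])

lemma deriv_theta_t:
  fixes f v :: "real \<Rightarrow> real"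
  assumes df: "(f has_real_derivative f') (at s within X)"
    and dv: "(v has_real_derivative w) (at s within X)" and c: "c \<noteq> 0"
  shows "((\<lambda>s. N * arctan (f s / c) + arctan (v s)) has_real_derivative
           N * ((c * f') / (c\<^sup>2 + (f s)\<^sup>2)) + w / (1 + (v s)\<^sup>2)) (at s within X)"
  by (rule DERIV_add[OF DERIV_cmult[OF deriv_arctan_const[OF df c]] deriv_arctan1[OF dv]])

lemma deriv_thetax_x:
  fixes f v w :: "real \<Rightarrow> real"
  assumes df: "(f has_real_derivative v x) (at x within X)"
    and dv: "(v has_real_derivative w x) (at x within X)"
    and dw: "(w has_real_derivative w3) (at x within X)" and x: "x \<noteq> 0"
  shows "((\<lambda>y. N * ((y * v y - f y) / (y\<^sup>2 + (f y)\<^sup>2)) + w y / (1 + (v y)\<^sup>2)) has_real_derivative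
           N * (((x * w x) * (x\<^sup>2 + (f x)\<^sup>2) - (2 * x + 2 * f x * v x) * (x * v x - f x)) / (x\<^sup>2 + (f x)\<^sup>2)\<^sup>2)
           + (w3 * (1 + (v x)\<^sup>2) - (2 * v x * w x) * w x) / (1 + (v x)\<^sup>2)\<^sup>2) (at x within X)"
proof -
  have n1: "((\<lambda>y. y * v y - f y) has_real_derivative x * w x) (at x within X)"
  proof -
    have "((\<lambda>y. y * v y - f y) has_real_derivative (1 * v x + w x * x) - v x) (at x within X)"
      by (rule DERIV_diff[OF DERIV_mult[OF DERIV_ident dv] df])
    then show ?thesis by (simp add: algebra_simps)
  qed
  have d1: "((\<lambda>y. y\<^sup>2 + (f y)\<^sup>2) has_real_derivative 2 * x + 2 * f x * v x) (at x within X)"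
  proof -
    have "((\<lambda>y. y * y + f y * f y) has_real_derivative (1 * x + 1 * x) + (v x * f x + v x * f x)) (at x within X)"
      by (rule DERIV_add[OF DERIV_mult[OF DERIV_ident DERIV_ident] DERIV_mult[OF df df]])
    then show ?thesis by (simp add: algebra_simps power2_eq_square)
  qed
  have A: "((\<lambda>y. (y * v y - f y) / (y\<^sup>2 + (f y)\<^sup>2)) has_real_derivative
      ((x * w x) * (x\<^sup>2 + (f x)\<^sup>2) - (2 * x + 2 * f x * v x) * (x * v x - f x)) / (x\<^sup>2 + (f x)\<^sup>2)\<^sup>2) (at x within X)"
  proof -
    have nz: "x\<^sup>2 + (f x)\<^sup>2 \<noteq> 0" using sqxpos[OF x, of "f x"] by linarith
    show ?thesis using DERIV_quotient[OF n1 d1 nz] by (simp add: numeral_2_eq_2)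
  qed
  have d2: "((\<lambda>y. 1 + (v y)\<^sup>2) has_real_derivative 2 * v x * w x) (at x within X)"
  proof -
    have "((\<lambda>y. 1 + v y * v y) has_real_derivative 0 + (w x * v x + w x * v x)) (at x within X)"
      by (rule DERIV_add[OF DERIV_const DERIV_mult[OF dv dv]])
    then show ?thesis by (simp add: algebra_simps power2_eq_square)
  qed
  have B: "((\<lambda>y. w y / (1 + (v y)\<^sup>2)) has_real_derivative
      (w3 * (1 + (v x)\<^sup>2) - (2 * v x * w x) * w x) / (1 + (v x)\<^sup>2)\<^sup>2) (at x within X)"
  proof -
    have nz: "1 + (v x)\<^sup>2 \<noteq> 0" using sq1pos[of "v x"] by simp
    show ?thesis using DERIV_quotient[OF dw d2 nz] by (simp add: numeral_2_eq_2)
  qed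
  show ?thesis by (rule DERIV_add[OF DERIV_cmult[OF A] B])
qed

theorem proposition4p5:
  fixes n :: nat and a p q :: real and T :: ereal
    and upp :: "real \<Rightarrow> real"
    and F :: "real \<times> real \<Rightarrow> real"
    and D :: "nat \<Rightarrow> nat \<Rightarrow> real \<times> real \<Rightarrow> real"
  defines "S \<equiv> {(t, x). 0 \<le> t \<and> ereal t < T \<and> 1 \<le> x \<and> x \<le> a}"
  assumes n3: "n \<ge> 3" and a1: "a > 1" and T0: "T > 0"
    and upp_smooth: "smooth1 upp"
    and upp_pos: "\<forall>x. 1 < x \<and> x < a \<longrightarrow> upp x > 0"
    and upp_end1: "upp 1 = 0" "deriv upp 1 > 0"
    and upp_enda: "upp a = 0" "deriv upp a < 0"
    and F_smooth: "smooth2_on S F D"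
    and flow: "\<forall>t x. (t, x) \<in> S \<longrightarrow>
        D 1 0 (t, x) = upp x * (D 0 2 (t, x) / (1 + (D 0 1 (t, x))\<^sup>2)
           + real (n - 1) * (x * D 0 1 (t, x) - F (t, x)) / (x\<^sup>2 + (F (t, x))\<^sup>2))"
    and bdry: "\<forall>t. 0 \<le> t \<and> ereal t < T \<longrightarrow> F (t, 1) = q \<and> F (t, a) = p"
    and supercritical: "\<forall>x. 1 \<le> x \<and> x \<le> a \<longrightarrow>
        real (n - 1) * arctan (F (0, x) / x) + arctan (D 0 1 (0, x)) > real (n - 2) * (pi / 2)"
  shows "\<exists>A B. \<forall>t. 0 \<le> t \<and> ereal t < T \<longrightarrow>
           (\<forall>x. 1 \<le> x \<and> x \<le> a \<longrightarrow> \<bar>D 0 1 (t, x)\<bar> \<le> A * (1 + t) * exp (B * t))"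
proof -
  define N where "N = real (n - 1)"
  have "n - 1 \<ge> 2" using n3 by linarith
  then have N2: "N \<ge> 2" unfolding N_def by linarith
  have Nm: "real (n - 2) = N - 1" using n3 unfolding N_def by (simp add: of_nat_diff)
  have FD: "\<And>z. z \<in> S \<Longrightarrow> D 0 0 z = F z"
    and contD: "\<And>i j. continuous_on S (D i j)"
    and dtD: "\<And>i j t x. (t, x) \<in> S \<Longrightarrow> ((\<lambda>s. D i j (s, x)) has_real_derivative D (Suc i) j (t, x)) (at t within {s. (s, x) \<in> S})"
    and dxD: "\<And>i j t x. (t, x) \<in> S \<Longrightarrow> ((\<lambda>y. D i j (t, y)) has_real_derivative D i (Suc j) (t, x)) (at x within {y. (t, y) \<in> S})"
    using F_smooth unfolding smooth2_on_def by blast+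
  have slx: "\<And>t x. (t, x) \<in> S \<Longrightarrow> {y. (t, y) \<in> S} = {1..a}" by (auto simp: S_def)
  have dx: "\<And>i j t x. (t, x) \<in> S \<Longrightarrow> ((\<lambda>y. D i j (t, y)) has_real_derivative D i (Suc j) (t, x)) (at x within {1..a})"
    using dxD slx by metis
  have dx00: "\<And>t x. (t, x) \<in> S \<Longrightarrow> ((\<lambda>y. D 0 0 (t, y)) has_real_derivative D 0 1 (t, x)) (at x within {1..a})"
    using dx[of _ _ 0 0] by simp
  have dx01: "\<And>t x. (t, x) \<in> S \<Longrightarrow> ((\<lambda>y. D 0 1 (t, y)) has_real_derivative D 0 2 (t, x)) (at x within {1..a})"
    using dx[of _ _ 0 1] by (simp add: numeral_2_eq_2)
  have dx02: "\<And>t x. (t, x) \<in> S \<Longrightarrow> ((\<lambda>y. D 0 2 (t, y)) has_real_derivative D 0 3 (t, x)) (at x within {1..a})"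
    using dx[of _ _ 0 2] by (simp add: numeral_3_eq_3 numeral_2_eq_2)
  have dx10: "\<And>t x. (t, x) \<in> S \<Longrightarrow> ((\<lambda>y. D 1 0 (t, y)) has_real_derivative D 1 1 (t, x)) (at x within {1..a})"
    using dx[of _ _ 1 0] by simp
  have dt00: "\<And>t x. (t, x) \<in> S \<Longrightarrow> ((\<lambda>s. D 0 0 (s, x)) has_real_derivative D 1 0 (t, x)) (at t within {s. (s, x) \<in> S})"
    using dtD[of _ _ 0 0] by simp
  have dt01: "\<And>t x. (t, x) \<in> S \<Longrightarrow> ((\<lambda>s. D 0 1 (s, x)) has_real_derivative D 1 1 (t, x)) (at t within {s. (s, x) \<in> S})"
    using dtD[of _ _ 0 1] by simp
  have T0': "ereal 0 < T" using T0 by (simp add: zero_ereal_def)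
  have S0: "\<And>x. 1 \<le> x \<Longrightarrow> x \<le> a \<Longrightarrow> (0, x) \<in> S" using T0' by (simp add: S_def)
  have Sy: "\<And>t x y. (t, x) \<in> S \<Longrightarrow> 1 \<le> y \<Longrightarrow> y \<le> a \<Longrightarrow> (t, y) \<in> S" by (simp add: S_def)
  have Sx: "\<And>t x. (t, x) \<in> S \<Longrightarrow> 1 \<le> x \<and> x \<le> a \<and> 0 \<le> t" by (simp add: S_def)

  define Th where "Th z = N * arctan (D 0 0 z / snd z) + arctan (D 0 1 z)" for z
  define Thx where "Thx z = N * ((snd z * D 0 1 z - D 0 0 z) / ((snd z)\<^sup>2 + (D 0 0 z)\<^sup>2)) + D 0 2 z / (1 + (D 0 1 z)\<^sup>2)" for z
  define Tht where "Tht z = N * ((snd z * D 1 0 z) / ((snd z)\<^sup>2 + (D 0 0 z)\<^sup>2)) + D 1 1 z / (1 + (D 0 1 z)\<^sup>2)" for z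

  have ThDx: "((\<lambda>y. Th (t, y)) has_real_derivative Thx (t, x)) (at x within {1..a})" if "(t, x) \<in> S" for t x
  proof -
    have "x \<noteq> 0" using Sx[OF that] by auto
    from deriv_theta_x[where f="\<lambda>y. D 0 0 (t, y)" and v="\<lambda>y. D 0 1 (t, y)", OF dx00[OF that] dx01[OF that] this, of N]
    show ?thesis unfolding Th_def Thx_def by simp
  qed
  have ThDt: "((\<lambda>s. Th (s, x)) has_real_derivative Tht (t, x)) (at t within {s. (s, x) \<in> S})" if "(t, x) \<in> S" for t x
  proof -
    have "x \<noteq> 0" using Sx[OF that] by auto
    from deriv_theta_t[where f="\<lambda>s. D 0 0 (s, x)" and v="\<lambda>s. D 0 1 (s, x)", OF dt00[OF that] dt01[OF that] this, of N]
    show ?thesis unfolding Th_def Tht_def by simp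
  qed
  have flowD: "D 1 0 (t, x) = upp x * Thx (t, x)" if "(t, x) \<in> S" for t x
    using flow[rule_format, OF that] FD[OF that] unfolding Thx_def N_def by (simp add: algebra_simps)
  have contTh: "continuous_on S Th"
    unfolding Th_def by (intro continuous_intros contD) (auto simp: S_def)

  have upp_d: "\<And>x. (upp has_real_derivative deriv upp x) (at x)"
  proof -
    fix x
    have "((deriv ^^ 0) upp) differentiable (at x)" using upp_smooth unfolding smooth1_def by blast
    then show "(upp has_real_derivative deriv upp x) (at x)" by (simp add: DERIV_deriv_iff_real_differentiable)
  qed
  have dupp_cont: "continuous_on {1..a} (deriv upp)"
  proof (intro continuous_at_imp_continuous_on ballI)
    fix x
    have "((deriv ^^ 1) upp) differentiable (at x)" using upp_smooth unfolding smooth1_def by blast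
    then have "DERIV (deriv upp) x :> deriv (deriv upp) x" by (simp add: DERIV_deriv_iff_real_differentiable)
    then show "isCont (deriv upp) x" by (rule DERIV_isCont)
  qed
  have ne: "{1..a} \<noteq> {}" using a1 by simp
  have "continuous_on {1..a} (\<lambda>y. \<bar>deriv upp y\<bar>)" using dupp_cont by (intro continuous_intros)
  from continuous_attains_sup[OF compact_Icc ne this]
  obtain xu where xu: "xu \<in> {1..a}" "\<forall>y\<in>{1..a}. \<bar>deriv upp y\<bar> \<le> \<bar>deriv upp xu\<bar>" by blast
  define U where "U = \<bar>deriv upp xu\<bar>"
  have U: "\<And>y. 1 \<le> y \<Longrightarrow> y \<le> a \<Longrightarrow> \<bar>deriv upp y\<bar> \<le> U" "U \<ge> 0" using xu unfolding U_def by auto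
  have upp_nn: "\<And>y. 1 \<le> y \<Longrightarrow> y \<le> a \<Longrightarrow> upp y \<ge> 0"
  proof -
    fix y :: real assume "1 \<le> y" "y \<le> a"
    then consider "y = 1" | "y = a" | "1 < y \<and> y < a" by linarith
    then show "upp y \<ge> 0" using upp_pos upp_end1 upp_enda by cases auto
  qed

  (* Step A: the phase does not decrease *)
  have cTh0: "continuous_on {1..a} (\<lambda>x. Th (0, x))"
    by (rule DERIV_continuous_on) (use ThDx S0 in auto)
  from continuous_attains_inf[OF compact_Icc ne cTh0]
  obtain xm where xm: "xm \<in> {1..a}" "\<forall>y\<in>{1..a}. Th (0, xm) \<le> Th (0, y)" by blast
  define m0 where "m0 = Th (0, xm)"
  have m0gt: "m0 > (N - 1) * (pi / 2)"
  proof -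
    have "(0, xm) \<in> S" using xm S0 by auto
    then have "D 0 0 (0, xm) = F (0, xm)" by (rule FD)
    then show ?thesis using supercritical[rule_format, of xm] xm Nm unfolding m0_def Th_def N_def by auto
  qed
  have ThA: "Th (t, x) \<ge> m0" if tx: "(t, x) \<in> S" for t x
  proof -
    have key: "Th (t, x) > m0 - e * (1 + t)" if "e > 0" for e
    proof -
      define g where "g z = m0 - e * (1 + fst z) - Th z" for z
      define gt where "gt z = - e - Tht z" for z
      have "\<forall>t x. (t, x) \<in> S \<longrightarrow> g (t, x) < 0"
      proof (rule mp_principle[of T a g gt, folded S_def])
        show "continuous_on S g" unfolding g_def by (intro continuous_intros contTh)
        show "\<forall>t x. (t, x) \<in> S \<longrightarrow> ((\<lambda>s. g (s, x)) has_real_derivative gt (t, x)) (at t within {s. (s, x) \<in> S})"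
        proof (intro allI impI)
          fix t x assume "(t, x) \<in> S"
          have "((\<lambda>s. m0 - e * (1 + s) - Th (s, x)) has_real_derivative 0 - e * (0 + 1) - Tht (t, x)) (at t within {s. (s, x) \<in> S})"
            by (rule DERIV_diff[OF DERIV_diff[OF DERIV_const DERIV_cmult[OF DERIV_add[OF DERIV_const DERIV_ident]]] ThDt[OF \<open>(t, x) \<in> S\<close>]])
          then show "((\<lambda>s. g (s, x)) has_real_derivative gt (t, x)) (at t within {s. (s, x) \<in> S})"
            unfolding g_def gt_def by simp
        qed
        show "\<forall>x. 1 \<le> x \<and> x \<le> a \<longrightarrow> g (0, x) < 0"
        proof (intro allI impI)
          fix x :: real assume "1 \<le> x \<and> x \<le> a"
          then have "Th (0, xm) \<le> Th (0, x)" using xm(2) by auto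
          then show "g (0, x) < 0" using \<open>e > 0\<close> unfolding g_def m0_def by simp
        qed
        show "\<forall>t x. (t, x) \<in> S \<longrightarrow> 0 < t \<longrightarrow> g (t, x) = 0 \<longrightarrow> (\<forall>y. 1 \<le> y \<and> y \<le> a \<longrightarrow> g (t, y) \<le> 0) \<longrightarrow> gt (t, x) < 0"
        proof (intro allI impI)
          fix t x assume tx: "(t, x) \<in> S" and "0 < t" and g0: "g (t, x) = 0" and gle: "\<forall>y. 1 \<le> y \<and> y \<le> a \<longrightarrow> g (t, y) \<le> 0"
          have mn: "\<forall>y\<in>{1..a}. Th (t, x) \<le> Th (t, y)"
            using g0 gle unfolding g_def by auto
          have der: "\<forall>y\<in>{1..a}. ((\<lambda>y. Th (t, y)) has_real_derivative Thx (t, y)) (at y within {1..a})"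
            using ThDx Sy[OF tx] by auto
          have hu: "\<forall>y\<in>{1..a}. D 1 0 (t, y) = upp y * Thx (t, y)"
            using flowD Sy[OF tx] by auto
          have "D 1 0 (t, x) = 0 \<and> D 1 1 (t, x) \<ge> 0"
            using min_h[where \<phi>="\<lambda>y. Th (t, y)" and \<phi>'="\<lambda>y. Thx (t, y)" and h="\<lambda>y. D 1 0 (t, y)" and u=upp,
                OF a1 der dx10[OF tx] hu _ upp_end1(1) upp_enda(1) _ mn] upp_pos Sx[OF tx] by auto
          moreover have "1 + (D 0 1 (t, x))\<^sup>2 > 0" by (rule sq1pos)
          ultimately have "Tht (t, x) \<ge> 0" unfolding Tht_def by simp
          then show "gt (t, x) < 0" unfolding gt_def using \<open>e > 0\<close> by simp
        qed
      qed
      then have "g (t, x) < 0" using tx by blast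
      then show ?thesis unfolding g_def by simp
    qed
    show ?thesis
    proof (rule ccontr)
      assume "\<not> m0 \<le> Th (t, x)"
      then have lt: "Th (t, x) < m0" by simp
      have t0: "0 \<le> t" using Sx[OF tx] by simp
      define e where "e = (m0 - Th (t, x)) / (2 * (1 + t))"
      have e0: "e > 0" unfolding e_def using lt t0 by simp
      have eq: "e * (1 + t) = (m0 - Th (t, x)) / 2" unfolding e_def using t0 by (simp add: field_simps)
      have "m0 - (m0 - Th (t, x)) / 2 < Th (t, x)" using key[OF e0] unfolding eq .
      then show False using lt by (simp add: field_simps)
    qed
  qed

  have Fpos: "D 0 0 (t, x) > 0" if tx: "(t, x) \<in> S" for t x
  proof -
    have x1: "x \<ge> 1" using Sx[OF tx] by simp
    define hp where "hp = pi / 2"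
    have "Th (t, x) \<ge> m0" by (rule ThA[OF tx])
    then have "N * arctan (D 0 0 (t, x) / x) + arctan (D 0 1 (t, x)) \<ge> m0" unfolding Th_def by simp
    moreover have "arctan (D 0 1 (t, x)) < hp" unfolding hp_def by (rule arctan_ubound)
    moreover have "(N - 2) * hp \<ge> 0" using N2 unfolding hp_def by simp
    moreover have "m0 > (N - 1) * hp" using m0gt unfolding hp_def .
    ultimately have "N * arctan (D 0 0 (t, x) / x) > 0" by (simp add: algebra_simps)
    then have "arctan (D 0 0 (t, x) / x) > 0" using N2 by (simp add: zero_less_mult_iff)
    then have "D 0 0 (t, x) / x > 0" by simp
    then show ?thesis using x1 by (simp add: zero_less_divide_iff)
  qed

  have cF0: "continuous_on {1..a} (\<lambda>x. D 0 0 (0, x))"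
    by (rule DERIV_continuous_on) (use dx00 S0 in auto)
  from continuous_attains_sup[OF compact_Icc ne cF0]
  obtain xf where xf: "xf \<in> {1..a}" "\<forall>y\<in>{1..a}. D 0 0 (0, y) \<le> D 0 0 (0, xf)" by blast
  define Cf where "Cf = \<bar>p\<bar> + \<bar>q\<bar> + \<bar>D 0 0 (0, xf)\<bar> + 1"
  have Cfpos: "Cf > 0" unfolding Cf_def by simp
  have FB: "D 0 0 (t, x) < Cf" if tx: "(t, x) \<in> S" for t x
  proof -
    define g where "g z = D 0 0 z - Cf" for z
    have "\<forall>t x. (t, x) \<in> S \<longrightarrow> g (t, x) < 0"
    proof (rule mp_principle[of T a g "D 1 0", folded S_def])
      show "continuous_on S g" unfolding g_def by (intro continuous_intros contD)
      show "\<forall>t x. (t, x) \<in> S \<longrightarrow> ((\<lambda>s. g (s, x)) has_real_derivative D 1 0 (t, x)) (at t within {s. (s, x) \<in> S})"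
        unfolding g_def using DERIV_diff[OF dt00 DERIV_const] by simp
      show "\<forall>x. 1 \<le> x \<and> x \<le> a \<longrightarrow> g (0, x) < 0"
        using xf unfolding g_def Cf_def by force
      show "\<forall>t x. (t, x) \<in> S \<longrightarrow> 0 < t \<longrightarrow> g (t, x) = 0 \<longrightarrow> (\<forall>y. 1 \<le> y \<and> y \<le> a \<longrightarrow> g (t, y) \<le> 0) \<longrightarrow> D 1 0 (t, x) < 0"
      proof (intro allI impI)
        fix t x assume tx: "(t, x) \<in> S" and "0 < t" and g0: "g (t, x) = 0" and gle: "\<forall>y. 1 \<le> y \<and> y \<le> a \<longrightarrow> g (t, y) \<le> 0"
        have fx: "D 0 0 (t, x) = Cf" using g0 unfolding g_def by simp
        have mx: "\<forall>y\<in>{1..a}. D 0 0 (t, y) \<le> D 0 0 (t, x)" using gle fx unfolding g_def by auto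
        have tT: "0 \<le> t \<and> ereal t < T" using tx unfolding S_def by simp
        have "D 0 0 (t, 1) = q" "D 0 0 (t, a) = p"
          using bdry[rule_format, OF tT] FD[OF Sy[OF tx, of 1]] FD[OF Sy[OF tx, of a]] a1 by auto
        then have "x \<noteq> 1" "x \<noteq> a" using fx unfolding Cf_def by auto
        then have xi: "1 < x" "x < a" using Sx[OF tx] by auto
        have der: "\<forall>y\<in>{1..a}. ((\<lambda>y. D 0 0 (t, y)) has_real_derivative D 0 1 (t, y)) (at y within {1..a})"
          using dx00 Sy[OF tx] by auto
        have "D 0 1 (t, x) = 0 \<and> D 0 2 (t, x) \<le> 0"
          by (rule max_second[OF der dx01[OF tx] xi mx])
        moreover have "upp x > 0" using upp_pos xi by auto
        moreover have "N * ((x * 0 - Cf) / (x\<^sup>2 + Cf\<^sup>2)) < 0"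
          using N2 Cfpos sqxpos[of x Cf] xi by (simp add: mult_pos_neg divide_neg_pos)
        ultimately have "Thx (t, x) < 0" unfolding Thx_def using fx by simp
        then show "D 1 0 (t, x) < 0" using flowD[OF tx] \<open>upp x > 0\<close> by (simp add: mult_pos_neg)
      qed
    qed
    then show ?thesis using tx unfolding g_def by simp
  qed

  have cv0: "continuous_on {1..a} (\<lambda>x. D 0 1 (0, x))"
    by (rule DERIV_continuous_on) (use dx01 S0 in auto)
  from continuous_attains_sup[OF compact_Icc ne cv0]
  obtain xv where xv: "xv \<in> {1..a}" "\<forall>y\<in>{1..a}. D 0 1 (0, y) \<le> D 0 1 (0, xv)" by blast
  define M0 where "M0 = \<bar>D 0 1 (0, xv)\<bar> + Cf"
  define B where "B = U * N * a + 1"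
  define W where "W s = (M0 + 1) * exp (B * s)" for s
  have "U * N * a \<ge> 0" using U(2) N2 a1 by (intro mult_nonneg_nonneg) auto
  then have Bpos: "B > 0" unfolding B_def by linarith
  have M0Cf: "M0 \<ge> Cf" unfolding M0_def by simp
  have Wge: "W s \<ge> M0 + 1" if "s \<ge> 0" for s
  proof -
    have "exp (B * s) \<ge> 1" using Bpos that by simp
    moreover have "M0 + 1 > 0" using M0Cf Cfpos by simp
    ultimately show ?thesis unfolding W_def by simp
  qed
  have WD: "(W has_real_derivative B * W s) (at s within X)" for s X
  proof -
    have "((\<lambda>s. (M0 + 1) * exp (B * s)) has_real_derivative (M0 + 1) * (exp (B * s) * (B * 1))) (at s within X)"
      by (rule DERIV_cmult[OF DERIV_chain2[OF DERIV_exp DERIV_cmult[OF DERIV_ident]]])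
    then show ?thesis unfolding W_def by (simp add: algebra_simps)
  qed
  have VB: "D 0 1 (t, x) < W t" if tx: "(t, x) \<in> S" for t x
  proof -
    define g where "g z = D 0 1 z - W (fst z)" for z
    define gt where "gt z = D 1 1 z - B * W (fst z)" for z
    have "\<forall>t x. (t, x) \<in> S \<longrightarrow> g (t, x) < 0"
    proof (rule mp_principle[of T a g gt, folded S_def])
      show "continuous_on S g" unfolding g_def W_def by (intro continuous_intros contD)
      show "\<forall>t x. (t, x) \<in> S \<longrightarrow> ((\<lambda>s. g (s, x)) has_real_derivative gt (t, x)) (at t within {s. (s, x) \<in> S})"
        unfolding g_def gt_def using DERIV_diff[OF dt01 WD] by simp
      show "\<forall>x. 1 \<le> x \<and> x \<le> a \<longrightarrow> g (0, x) < 0"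
      proof (intro allI impI)
        fix x :: real assume "1 \<le> x \<and> x \<le> a"
        then have "D 0 1 (0, x) \<le> D 0 1 (0, xv)" using xv(2) by auto
        moreover have "W 0 = M0 + 1" unfolding W_def by simp
        ultimately show "g (0, x) < 0" unfolding g_def M0_def using Cfpos by simp
      qed
      show "\<forall>t x. (t, x) \<in> S \<longrightarrow> 0 < t \<longrightarrow> g (t, x) = 0 \<longrightarrow> (\<forall>y. 1 \<le> y \<and> y \<le> a \<longrightarrow> g (t, y) \<le> 0) \<longrightarrow> gt (t, x) < 0"
      proof (intro allI impI)
        fix t x assume tx: "(t, x) \<in> S" and "0 < t" and g0: "g (t, x) = 0" and gle: "\<forall>y. 1 \<le> y \<and> y \<le> a \<longrightarrow> g (t, y) \<le> 0"
        define V where "V = W t"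
        define f0 where "f0 = D 0 0 (t, x)"
        define w2 where "w2 = D 0 2 (t, x)"
        define w3 where "w3 = D 0 3 (t, x)"
        have vx: "D 0 1 (t, x) = V" using g0 unfolding g_def V_def by simp
        have mx: "\<forall>y\<in>{1..a}. D 0 1 (t, y) \<le> D 0 1 (t, x)" using gle vx unfolding g_def V_def by auto
        have xr: "1 \<le> x" "x \<le> a" using Sx[OF tx] by auto
        have VM: "V \<ge> M0 + 1" unfolding V_def using Wge Sx[OF tx] by simp
        have f0p: "f0 > 0" "f0 < Cf" unfolding f0_def using Fpos[OF tx] FB[OF tx] by auto
        have Vf: "V > f0" using VM M0Cf f0p by simp
        have Vp: "V > 0" using Vf f0p by simp
        define X where "X = (x * V - f0) / (x\<^sup>2 + f0\<^sup>2)"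
        define Txx where "Txx = N * (((x * w2) * (x\<^sup>2 + f0\<^sup>2) - (2 * x + 2 * f0 * V) * (x * V - f0)) / (x\<^sup>2 + f0\<^sup>2)\<^sup>2)
           + (w3 * (1 + V\<^sup>2) - (2 * V * w2) * w2) / (1 + V\<^sup>2)\<^sup>2"
        have Thxx: "Thx (t, x) = N * X + w2 / (1 + V\<^sup>2)"
          unfolding Thx_def X_def w2_def f0_def vx[symmetric] by simp
        have xne: "x \<noteq> 0" using xr by simp
        have dThx: "((\<lambda>y. Thx (t, y)) has_real_derivative Txx) (at x within {1..a})"
        proof -
          from deriv_thetax_x[where f="\<lambda>y. D 0 0 (t, y)" and v="\<lambda>y. D 0 1 (t, y)" and w="\<lambda>y. D 0 2 (t, y)",
              OF dx00[OF tx] dx01[OF tx] dx02[OF tx] xne, of N]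
          show ?thesis unfolding Thx_def Txx_def f0_def w2_def w3_def vx[symmetric] by simp
        qed
        have dprod: "((\<lambda>y. upp y * Thx (t, y)) has_real_derivative deriv upp x * Thx (t, x) + Txx * upp x) (at x within {1..a})"
          by (rule DERIV_mult[OF has_field_derivative_at_within[OF upp_d] dThx])
        have xin: "x \<in> {1..a}" using xr by simp
        have dprod': "((\<lambda>y. D 1 0 (t, y)) has_real_derivative deriv upp x * Thx (t, x) + Txx * upp x) (at x within {1..a})"
          by (rule has_field_derivative_transform_within[OF dprod zero_less_one xin])
             (use flowD Sy[OF tx] in auto)
        have nb: "at x within {1..a} \<noteq> bot" using a1 xin by (simp add: trivial_limit_within)
        have D11: "D 1 1 (t, x) = deriv upp x * Thx (t, x) + Txx * upp x"
          by (rule has_field_derivative_unique[OF dx10[OF tx] dprod' nb])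
        have der1: "\<forall>y\<in>{1..a}. ((\<lambda>y. D 0 1 (t, y)) has_real_derivative D 0 2 (t, y)) (at y within {1..a})"
          using dx01 Sy[OF tx] by auto
        have mf: "(x < a \<longrightarrow> w2 \<le> 0) \<and> (1 < x \<longrightarrow> w2 \<ge> 0)"
          using max_first[OF der1 xin mx] unfolding w2_def by simp
        have pV: "1 + V\<^sup>2 > 0" by (rule sq1pos)
        have c1: "deriv upp x * (w2 / (1 + V\<^sup>2)) \<le> 0"
        proof -
          consider "x = 1" | "x = a" | "1 < x \<and> x < a" using xr by linarith
          then show ?thesis
          proof cases
            case 1
            then have "w2 \<le> 0" using mf a1 by simp
            then have "w2 / (1 + V\<^sup>2) \<le> 0" using pV by (simp add: divide_nonpos_pos)
            moreover have "deriv upp x \<ge> 0" using 1 upp_end1(2) by simp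
            ultimately show ?thesis using mult_nonneg_nonpos by blast
          next
            case 2
            then have "w2 \<ge> 0" using mf a1 by simp
            then have "w2 / (1 + V\<^sup>2) \<ge> 0" using pV by simp
            moreover have "deriv upp x \<le> 0" using 2 upp_enda(2) by simp
            ultimately show ?thesis using mult_nonpos_nonneg by blast
          next
            case 3
            then have "w2 = 0" using mf by simp
            then show ?thesis by simp
          qed
        qed
        have c2: "Txx * upp x \<le> 0"
        proof -
          consider "x = 1" | "x = a" | "1 < x \<and> x < a" using xr by linarith
          then show ?thesis
          proof cases
            case 1 then show ?thesis using upp_end1(1) by simp
          next
            case 2 then show ?thesis using upp_enda(1) by simp
          next
            case 3
            have "D 0 2 (t, x) = 0 \<and> D 0 3 (t, x) \<le> 0"
              using max_second[OF der1 dx02[OF tx] _ _ mx] 3 by simp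
            then have w: "w2 = 0" "w3 \<le> 0" unfolding w2_def w3_def by auto
            have "(2 * x + 2 * f0 * V) * (x * V - f0) \<ge> 0"
            proof -
              have "x * V \<ge> V" using xr Vp by simp
              then have "x * V - f0 \<ge> 0" using Vf by simp
              moreover have "2 * x + 2 * f0 * V \<ge> 0" using xr f0p Vp by simp
              ultimately show ?thesis by simp
            qed
            then have "(x * w2) * (x\<^sup>2 + f0\<^sup>2) - (2 * x + 2 * f0 * V) * (x * V - f0) \<le> 0"
              using w by simp
            then have Q0: "((x * w2) * (x\<^sup>2 + f0\<^sup>2) - (2 * x + 2 * f0 * V) * (x * V - f0)) / (x\<^sup>2 + f0\<^sup>2)\<^sup>2 \<le> 0"
              by (rule divide_nonpos_nonneg) simp
            have T1: "N * (((x * w2) * (x\<^sup>2 + f0\<^sup>2) - (2 * x + 2 * f0 * V) * (x * V - f0)) / (x\<^sup>2 + f0\<^sup>2)\<^sup>2) \<le> 0"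
              by (rule mult_nonneg_nonpos[OF _ Q0]) (use N2 in simp)
            have "w3 * (1 + V\<^sup>2) \<le> 0" using w pV mult_nonpos_nonneg[of w3 "1 + V\<^sup>2"] by simp
            then have "w3 * (1 + V\<^sup>2) - (2 * V * w2) * w2 \<le> 0" using w by simp
            then have T2: "(w3 * (1 + V\<^sup>2) - (2 * V * w2) * w2) / (1 + V\<^sup>2)\<^sup>2 \<le> 0"
              by (rule divide_nonpos_nonneg) simp
            have "Txx \<le> 0" unfolding Txx_def using T1 T2 by linarith
            moreover have "upp x \<ge> 0" using upp_nn xr by simp
            ultimately show ?thesis using mult_nonpos_nonneg by blast
          qed
        qed
        have c3: "deriv upp x * (N * X) \<le> U * N * a * V"
        proof -
          have den: "x\<^sup>2 + f0\<^sup>2 \<ge> 1"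
          proof -
            have "x\<^sup>2 \<ge> 1" using xr by simp
            moreover have "f0\<^sup>2 \<ge> 0" by simp
            ultimately show ?thesis by linarith
          qed
          have num: "x * V - f0 \<ge> 0" "x * V - f0 \<le> a * V"
          proof -
            have "x * V \<ge> V" using xr Vp by simp
            then show "x * V - f0 \<ge> 0" using Vf by simp
            have "x * V \<le> a * V" using xr Vp by (simp add: mult_right_mono)
            then show "x * V - f0 \<le> a * V" using f0p by simp
          qed
          have X0: "X \<ge> 0" unfolding X_def using num den by simp
          have X1: "X \<le> a * V"
          proof -
            have "X \<le> x * V - f0" unfolding X_def using num den by (simp add: divide_le_eq mult_le_cancel_left1 order.trans[OF _ mult_right_mono[OF den]])
            then show ?thesis using num by simp
          qed
          have NX: "N * X \<ge> 0" "N * X \<le> N * (a * V)" using X0 X1 N2 by (simp_all add: mult_left_mono)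
          have "deriv upp x * (N * X) \<le> \<bar>deriv upp x\<bar> * (N * X)" using NX by (simp add: mult_right_mono)
          also have "\<dots> \<le> U * (N * X)" using U(1)[OF xr] NX by (simp add: mult_right_mono)
          also have "\<dots> \<le> U * (N * (a * V))" using NX U(2) by (simp add: mult_left_mono)
          finally show ?thesis by (simp add: algebra_simps)
        qed
        have "D 1 1 (t, x) = deriv upp x * (N * X) + deriv upp x * (w2 / (1 + V\<^sup>2)) + Txx * upp x"
          unfolding D11 Thxx by (simp add: algebra_simps)
        also have "\<dots> \<le> U * N * a * V" using c1 c2 c3 by linarith
        also have "\<dots> < B * V" unfolding B_def using Vp by (simp add: algebra_simps)
        finally show "gt (t, x) < 0" unfolding gt_def V_def by simp
      qed
    qed
    then show ?thesis using tx unfolding g_def by simp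
  qed

  define L where "L = m0 - N * arctan Cf"
  have Lb: "tan L \<le> D 0 1 (t, x)" if tx: "(t, x) \<in> S" for t x
  proof -
    have xr: "1 \<le> x" using Sx[OF tx] by simp
    have fq: "D 0 0 (t, x) / x \<le> Cf"
    proof -
      have "D 0 0 (t, x) / x \<le> D 0 0 (t, x)" using xr Fpos[OF tx] by (simp add: divide_le_eq mult_le_cancel_left1)
      then show ?thesis using FB[OF tx] by simp
    qed
    then have "arctan (D 0 0 (t, x) / x) \<le> arctan Cf" by (simp add: arctan_le_iff)
    then have "N * arctan (D 0 0 (t, x) / x) \<le> N * arctan Cf" using N2 by (simp add: mult_left_mono)
    moreover have "Th (t, x) \<ge> m0" by (rule ThA[OF tx])
    ultimately have LA: "L \<le> arctan (D 0 1 (t, x))" unfolding L_def Th_def by simp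
    define hp where "hp = pi / 2"
    have "N * arctan Cf < N * hp" unfolding hp_def using N2 arctan_ubound[of Cf] by simp
    moreover have "m0 > (N - 1) * hp" using m0gt unfolding hp_def .
    ultimately have "L > - hp" unfolding L_def by (simp add: algebra_simps)
    moreover have "L < hp" using LA arctan_ubound[of "D 0 1 (t, x)"] unfolding hp_def by simp
    ultimately have "arctan (tan L) = L" unfolding hp_def by (intro arctan_tan) auto
    then have "arctan (tan L) \<le> arctan (D 0 1 (t, x))" using LA by simp
    then show ?thesis by (simp add: arctan_le_iff)
  qed

  define A where "A = \<bar>tan L\<bar> + M0 + 1"
  show ?thesis
  proof (intro exI allI impI)
    fix t x assume tT: "0 \<le> t \<and> ereal t < T" and xr: "1 \<le> x \<and> x \<le> a"
    then have tx: "(t, x) \<in> S" unfolding S_def by simp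
    have A0: "A \<ge> 0" unfolding A_def using M0Cf Cfpos by simp
    have e1: "(1 + t) * exp (B * t) \<ge> 1"
    proof -
      have "exp (B * t) \<ge> 1" using Bpos tT by simp
      moreover have "1 + t \<ge> 1" using tT by simp
      ultimately show ?thesis using mult_mono[of 1 "1 + t" 1 "exp (B * t)"] by simp
    qed
    have big: "A \<le> A * (1 + t) * exp (B * t)"
      using mult_left_mono[OF e1 A0] by (simp add: mult.assoc)
    have up: "D 0 1 (t, x) \<le> A * (1 + t) * exp (B * t)"
    proof -
      have "D 0 1 (t, x) < W t" by (rule VB[OF tx])
      also have "W t = (M0 + 1) * exp (B * t)" unfolding W_def ..
      also have "\<dots> \<le> A * (1 + t) * exp (B * t)"
      proof -
        have "M0 + 1 \<le> A * (1 + t)"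
        proof -
          have "M0 + 1 \<le> A" unfolding A_def by simp
          also have "A \<le> A * (1 + t)" using A0 tT by (simp add: mult_le_cancel_left1)
          finally show ?thesis .
        qed
        then show ?thesis by (simp add: mult_right_mono)
      qed
      finally show ?thesis by simp
    qed
    have lo: "- D 0 1 (t, x) \<le> A * (1 + t) * exp (B * t)"
    proof -
      have "- D 0 1 (t, x) \<le> - tan L" using Lb[OF tx] by simp
      also have "\<dots> \<le> A" unfolding A_def using M0Cf Cfpos by simp
      finally show ?thesis using big by simp
    qed
    show "\<bar>D 0 1 (t, x)\<bar> \<le> A * (1 + t) * exp (B * t)" using up lo by simp
  qed
qed

end
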